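(* Let $W\in C^1(\mathbb{R})$ satisfy (W-i) there is $\eta>0$ with $W(s)\geq\eta s^2$ for $|s|\leq1$ and $W(s)\geq\eta$ for $|s|\geq1$; (W-ii) $W''(0)=1$; (W-iii) there are $M>0$, $\alpha\in[0,2)$ with $W(s)\leq M|s|^\alpha$ for $s\geq0$. Let $\mathbf{u}_n$ be a sequence in $X$ with $E(\mathbf{u}_n)\to0$. Then, up to a subsequence, $\|\mathbf{u}_n\|\to0$.
   Context: $X=H^2(\mathbb{R})\times L^2(\mathbb{R})$ with elements $\mathbf{u}=(u,v)$ and norm $\|\mathbf{u}\|^2=\int(v^2+u_{xx}^2+u^2)\,dx$; $E(\mathbf{u})=\frac12\int(v^2+u_{xx}^2)\,dx+\int W(u)\,dx$. *)

theory Defs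
  imports "HOL-Analysis.Analysis"
begin

definition test_fun :: "(real \<Rightarrow> real) \<Rightarrow> bool" where
  "test_fun \<phi> \<longleftrightarrow>
     (\<exists>D :: nat \<Rightarrow> real \<Rightarrow> real. D 0 = \<phi> \<and>
        (\<forall>k x. (D k has_real_derivative D (Suc k) x) (at x))) \<and>
     (\<exists>R. \<forall>x. \<bar>x\<bar> > R \<longrightarrow> \<phi> x = 0)"

definition L2 :: "(real \<Rightarrow> real) \<Rightarrow> bool" where
  "L2 f \<longleftrightarrow> f \<in> borel_measurable lborel \<and> integrable lborel (\<lambda>x. (f x)\<^sup>2)"

definition weak_deriv :: "(real \<Rightarrow> real) \<Rightarrow> (real \<Rightarrow> real) \<Rightarrow> bool" where
  "weak_deriv u g \<longleftrightarrow>
     (\<forall>\<phi>. test_fun \<phi> \<longrightarrow>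
        (LINT x|lborel. u x * deriv \<phi> x) = - (LINT x|lborel. g x * \<phi> x))"

definition H2_with :: "(real \<Rightarrow> real) \<Rightarrow> (real \<Rightarrow> real) \<Rightarrow> bool" where
  "H2_with u uxx \<longleftrightarrow> L2 u \<and> L2 uxx \<and>
     (\<exists>ux. L2 ux \<and> weak_deriv u ux \<and> weak_deriv ux uxx)"

definition energy :: "(real \<Rightarrow> real) \<Rightarrow> (real \<Rightarrow> real) \<Rightarrow> (real \<Rightarrow> real) \<Rightarrow> (real \<Rightarrow> real) \<Rightarrow> ennreal" where
  "energy W u uxx v =
     (1/2) * (\<integral>\<^sup>+ x. ennreal ((v x)\<^sup>2 + (uxx x)\<^sup>2) \<partial>lborel)
     + (\<integral>\<^sup>+ x. ennreal (W (u x)) \<partial>lborel)"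

definition Xnorm :: "(real \<Rightarrow> real) \<Rightarrow> (real \<Rightarrow> real) \<Rightarrow> (real \<Rightarrow> real) \<Rightarrow> real" where
  "Xnorm u uxx v = sqrt (LINT x|lborel. (v x)\<^sup>2 + (uxx x)\<^sup>2 + (u x)\<^sup>2)"

end

theory Submission
  imports Defs "HOL-Computational_Algebra.Polynomial"
begin

definition smooth_with :: "(nat \<Rightarrow> real \<Rightarrow> real) \<Rightarrow> bool" where
  "smooth_with D \<longleftrightarrow> (\<forall>k x. (D k has_real_derivative D (Suc k) x) (at x))"

lemma smooth_withD: "smooth_with D \<Longrightarrow> (D k has_real_derivative D (Suc k) x) (at x)"
  by (simp add: smooth_with_def)

lemma smooth_with_cont: "smooth_with D \<Longrightarrow> continuous_on S (D k)"
  by (meson DERIV_isCont continuous_at_imp_continuous_on smooth_withD)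

lemma smooth_with_isCont: "smooth_with D \<Longrightarrow> isCont (D k) x"
  by (meson DERIV_isCont smooth_withD)

lemma smooth_with_shift: "smooth_with D \<Longrightarrow> smooth_with (\<lambda>k. D (Suc k))"
  by (simp add: smooth_with_def)

lemma smooth_with_add: "smooth_with D \<Longrightarrow> smooth_with E \<Longrightarrow> smooth_with (\<lambda>k x. D k x + E k x)"
  unfolding smooth_with_def by (auto intro: DERIV_add)

lemma smooth_with_diff: "smooth_with D \<Longrightarrow> smooth_with E \<Longrightarrow> smooth_with (\<lambda>k x. D k x - E k x)"
  unfolding smooth_with_def by (auto intro: DERIV_diff)

lemma smooth_with_cmult: "smooth_with D \<Longrightarrow> smooth_with (\<lambda>k x. c * D k x)"
  unfolding smooth_with_def by (auto intro: DERIV_cmult)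

lemma smooth_with_const: "smooth_with (\<lambda>k x. if k = 0 then c else 0)"
  unfolding smooth_with_def by auto

lemma smooth_with_affine: "smooth_with D \<Longrightarrow> smooth_with (\<lambda>k x. a^k * D k (a*x+b))"
  unfolding smooth_with_def
proof (intro allI)
  fix k x assume D: "\<forall>k x. (D k has_real_derivative D (Suc k) x) (at x)"
  have "((\<lambda>x. D k (a*x+b)) has_real_derivative D (Suc k) (a*x+b) * a) (at x)"
    by (rule DERIV_chain2[OF D[rule_format]]) (auto intro!: derivative_eq_intros)
  then show "((\<lambda>x. a ^ k * D k (a * x + b)) has_real_derivative a ^ Suc k * D (Suc k) (a * x + b)) (at x)"
    using DERIV_cmult[where c="a^k"] by (fastforce simp: algebra_simps)
qed

lemma Suc_choose': "Suc n choose k = (n choose k) + (if k = 0 then 0 else (n choose (k-1)))"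
  by (cases k) simp_all

lemma smooth_with_mult:
  assumes "smooth_with D" "smooth_with E"
  shows "smooth_with (\<lambda>k x. \<Sum>i = 0..k. real (k choose i) * D i x * E (k-i) x)"
  unfolding smooth_with_def
proof (intro allI)
  fix n x
  have *: "\<And>n. (D n has_real_derivative D (Suc n) x) (at x)"
          "\<And>n. (E n has_real_derivative E (Suc n) x) (at x)"
    using assms smooth_withD by auto
  have sumeq: "(\<Sum>i = 0..n.
               real (n choose i) * (D (Suc i) x * E (n-i) x + E (Suc (n-i)) x * D i x)) =
            E 0 x * D (Suc n) x + (\<Sum>i = 0..n. D i x * (real (Suc n choose i) * E (Suc n - i) x))"
    apply (simp add: Suc_choose' algebra_simps sum.distrib)
    apply (subst (4) sum_Suc_reindex)
    apply (auto simp: algebra_simps Suc_diff_le intro: sum.cong)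
    done
  have "((\<lambda>x. \<Sum>i = 0..n. real (n choose i) * D i x * E (n-i) x) has_real_derivative
         (\<Sum>i = 0..n. real (n choose i) * (D (Suc i) x * E (n-i) x + E (Suc (n-i)) x * D i x))) (at x)"
    by (auto intro!: DERIV_sum DERIV_cmult DERIV_mult * simp: mult.assoc)
  then show "((\<lambda>x. \<Sum>i = 0..n. real (n choose i) * D i x * E (n-i) x) has_real_derivative
         (\<Sum>i = 0..Suc n. real (Suc n choose i) * D i x * E (Suc n - i) x)) (at x)"
    using sumeq by (simp add: algebra_simps)
qed

lemma poly_exp_lim: "((\<lambda>z::real. poly q z * exp (-z)) \<longlongrightarrow> 0) at_top"
proof -
  have "((\<lambda>z::real. \<Sum>i\<le>degree q. coeff q i * (z ^ i / exp z)) \<longlongrightarrow> (\<Sum>i\<le>degree q. coeff q i * 0)) at_top"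
    by (intro tendsto_sum tendsto_mult tendsto_const tendsto_power_div_exp_0)
  moreover have "poly q z * exp(-z) = (\<Sum>i\<le>degree q. coeff q i * (z ^ i / exp (z::real)))" for z
    by (simp add: poly_altdef sum_distrib_right exp_minus divide_inverse mult.assoc)
  ultimately show ?thesis by simp
qed

lemma poly_exp_lim0: "((\<lambda>y::real. poly q (1/y) * exp (-(1/y))) \<longlongrightarrow> 0) (at_right 0)"
proof -
  have "filterlim (\<lambda>y::real. 1/y) at_top (at_right 0)"
    using filterlim_inverse_at_top_right by (simp add: inverse_eq_divide)
  from filterlim_compose[OF poly_exp_lim[of q] this] show ?thesis by simp
qed

fun PP :: "nat \<Rightarrow> real poly" where
  "PP 0 = 1"
| "PP (Suc k) = [:0,0,1:] * (PP k - pderiv (PP k))"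

definition ED :: "nat \<Rightarrow> real \<Rightarrow> real" where
  "ED k t = (if t > 0 then poly (PP k) (1/t) * exp (-(1/t)) else 0)"

lemma ED_pos_deriv:
  assumes "t > 0"
  shows "((\<lambda>t. poly p (1/t) * exp (-(1/t))) has_real_derivative
     poly ([:0,0,1:] * (p - pderiv p)) (1/t) * exp (-(1/t))) (at t)"
proof -
  have d1: "((\<lambda>t. 1/t) has_real_derivative -(1/t^2)) (at t)"
    using assms by (auto intro!: derivative_eq_intros simp: power2_eq_square)
  have d2: "((\<lambda>t. poly p (1/t)) has_real_derivative poly (pderiv p) (1/t) * (-(1/t^2))) (at t)"
    by (rule DERIV_chain2[OF poly_DERIV d1])
  have d3: "((\<lambda>t. exp (-(1/t))) has_real_derivative exp (-(1/t)) * (1/t^2)) (at t)"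
  proof -
    have "((\<lambda>t. -(1/t)) has_real_derivative 1/t^2) (at t)" using DERIV_minus[OF d1] by simp
    from DERIV_chain2[OF DERIV_exp this] show ?thesis by simp
  qed
  have "((\<lambda>t. poly p (1/t) * exp (-(1/t))) has_real_derivative
     poly (pderiv p) (1/t) * (-(1/t^2)) * exp (-(1/t)) + exp (-(1/t)) * (1/t^2) * poly p (1/t)) (at t)"
    by (rule DERIV_mult[OF d2 d3])
  then show ?thesis
    by (simp add: algebra_simps power2_eq_square)
qed

lemma ED_smooth: "smooth_with ED"
  unfolding smooth_with_def
proof (intro allI)
  fix k and x :: real
  consider "x > 0" | "x < 0" | "x = 0" by linarith
  then show "(ED k has_real_derivative ED (Suc k) x) (at x)"
  proof cases
    case 1
    have "((\<lambda>t. poly (PP k) (1/t) * exp (-(1/t))) has_real_derivative ED (Suc k) x) (at x)"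
      using ED_pos_deriv[OF 1, of "PP k"] 1 by (simp add: ED_def)
    then show ?thesis
      by (rule has_field_derivative_transform_within_open[where S="{0<..}"]) (use 1 in \<open>auto simp: ED_def\<close>)
  next
    case 2
    have "((\<lambda>t. 0) has_real_derivative ED (Suc k) x) (at x)"
      using 2 by (simp add: ED_def)
    then show ?thesis
      by (rule has_field_derivative_transform_within_open[where S="{..<0}"]) (use 2 in \<open>auto simp: ED_def\<close>)
  next
    case 3
    have L: "((\<lambda>y. (ED k y - ED k 0) / (y - 0)) \<longlongrightarrow> 0) (at_left 0)"
    proof (rule tendsto_eventually)
      show "\<forall>\<^sub>F y in at_left 0. (ED k y - ED k 0) / (y - 0) = (0::real)"
        using eventually_at_left_real[of "-1" 0] by (rule eventually_mono) (auto simp: ED_def)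
    qed
    have R: "((\<lambda>y. (ED k y - ED k 0) / (y - 0)) \<longlongrightarrow> 0) (at_right 0)"
    proof (rule Lim_transform_eventually[OF poly_exp_lim0[of "[:0,1:] * PP k"]])
      show "\<forall>\<^sub>F y in at_right 0. poly ([:0,1:] * PP k) (1/y) * exp (-(1/y)) = (ED k y - ED k 0) / (y - 0)"
        using eventually_at_right_real[of 0 1] by (rule eventually_mono) (auto simp: ED_def)
    qed
    have "((\<lambda>y. (ED k y - ED k 0) / (y - 0)) \<longlongrightarrow> 0) (at 0)"
      using L R by (simp add: filterlim_at_split)
    then show ?thesis using 3
      by (simp add: has_field_derivative_iff ED_def)
  qed
qed

lemma ED0: "ED 0 t = (if t > 0 then exp (-(1/t)) else 0)"
  by (simp add: ED_def)

lemma cs_integrable: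
  fixes f :: "real \<Rightarrow> real"
  assumes "continuous_on {a..b} f" "\<And>x. x \<notin> {a..b} \<Longrightarrow> f x = 0"
  shows "integrable lborel f"
proof -
  have "set_integrable lborel {a..b} f" by (rule borel_integrable_atLeastAtMost'[OF assms(1)])
  moreover have "(\<lambda>x. indicator {a..b} x *\<^sub>R f x) = f"
    using assms(2) by (force simp: indicator_def fun_eq_iff)
  ultimately show ?thesis by (simp add: set_integrable_def)
qed

lemma cs_LINT:
  fixes f :: "real \<Rightarrow> real"
  assumes "continuous_on {a..b} f" "\<And>x. x \<notin> {a..b} \<Longrightarrow> f x = 0"
  shows "(LINT x|lborel. f x) = integral {a..b} f"
proof -
  have "(f has_integral (LINT x|lborel. f x)) UNIV"
    by (rule has_integral_integral_lborel[OF cs_integrable[OF assms]])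
  moreover have "(f has_integral integral {a..b} f) UNIV"
    by (rule has_integral_on_superset[OF integrable_integral[OF integrable_continuous_real[OF assms(1)]]])
       (use assms(2) in auto)
  ultimately show ?thesis by (rule has_integral_unique)
qed

lemma antideriv_left0:
  fixes f :: "real \<Rightarrow> real"
  assumes cont: "continuous_on UNIV f" and z: "\<And>x. x < a \<Longrightarrow> f x = 0" and ba: "b < a"
  shows "((\<lambda>x. integral {b..x} f) has_real_derivative f x) (at x)"
proof (cases "x < a")
  case True
  have "((\<lambda>x. 0) has_real_derivative f x) (at x)" using True z by simp
  then show ?thesis
  proof (rule has_field_derivative_transform_within_open[where S="{..<a}"])
    fix y :: real assume "y \<in> {..<a}"
    then have "\<forall>t\<in>{b..y}. f t = 0" using z by auto
    then show "0 = integral {b..y} f" by (metis integral_unique has_integral_is_0) 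
  qed (use True in auto)
next
  case False
  have "((\<lambda>u. integral {b..u} f) has_vector_derivative f x) (at x within {b..x+1})"
    by (rule integral_has_vector_derivative) (use False ba cont continuous_on_subset in auto)
  then have "((\<lambda>u. integral {b..u} f) has_vector_derivative f x) (at x)"
    using at_within_interior[of x "{b..x+1}"] False ba by auto
  then show ?thesis by (simp add: has_real_derivative_iff_has_vector_derivative)
qed

lemma smooth_with_antideriv:
  assumes "smooth_with D" "\<And>x. (F has_real_derivative D 0 x) (at x)"
  shows "smooth_with (\<lambda>k. if k = 0 then F else D (k - 1))"
  unfolding smooth_with_def
proof (intro allI)
  fix k x show "((if k = 0 then F else D (k - 1)) has_real_derivative
     (if Suc k = 0 then F else D (Suc k - 1)) x) (at x)"
    using assms by (cases k) (auto simp: smooth_with_def)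
qed

definition psi :: "real \<Rightarrow> real" where "psi t = ED 0 t * ED 0 (1 - t)"

definition Dpsi :: "nat \<Rightarrow> real \<Rightarrow> real" where
  "Dpsi k x = (\<Sum>i = 0..k. real (k choose i) * ED i x * ((-1)^(k-i) * ED (k-i) ((-1)*x+1)))"

lemma Dpsi_smooth: "smooth_with Dpsi"
  using smooth_with_mult[OF ED_smooth smooth_with_affine[OF ED_smooth, of "-1" 1]]
  unfolding Dpsi_def[abs_def] .

lemma Dpsi0: "Dpsi 0 = psi"
  by (auto simp: Dpsi_def psi_def fun_eq_iff)

lemma psi_zero: "t \<le> 0 \<or> t \<ge> 1 \<Longrightarrow> psi t = 0"
  by (auto simp: psi_def ED0)

lemma psi_pos: "0 < t \<Longrightarrow> t < 1 \<Longrightarrow> psi t > 0"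
  by (auto simp: psi_def ED0)

lemma psi_nonneg: "psi t \<ge> 0"
  by (auto simp: psi_def ED0)

lemma psi_cont: "continuous_on S psi"
  using smooth_with_cont[OF Dpsi_smooth, of S 0] by (simp add: Dpsi0)

definition Cpsi :: real where "Cpsi = integral {0..1} psi"

lemma Cpsi_pos: "Cpsi > 0"
proof -
  have "Cpsi \<ge> 0" unfolding Cpsi_def
    by (rule integral_nonneg) (auto intro: integrable_continuous_real psi_cont psi_nonneg)
  moreover have "Cpsi \<noteq> 0"
  proof
    assume "Cpsi = 0"
    then have "\<forall>x \<in> {0..1}. psi x = 0"
      using integral_eq_0_iff[of 0 1 psi] psi_cont psi_nonneg by (simp add: Cpsi_def)
    then show False using psi_pos[of "1/2"] by auto
  qed
  ultimately show ?thesis by simp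
qed

lemma LINT_psi: "(LINT x|lborel. psi x) = Cpsi"
  unfolding Cpsi_def by (rule cs_LINT[OF psi_cont]) (auto intro: psi_zero)

lemma integrable_psi: "integrable lborel psi"
  by (rule cs_integrable[OF psi_cont, of 0 1]) (auto intro: psi_zero)

definition Phi :: "real \<Rightarrow> real" where "Phi t = integral {-1..t} psi / Cpsi"

definition DPhi :: "nat \<Rightarrow> real \<Rightarrow> real" where
  "DPhi k = (if k = 0 then Phi else (\<lambda>x. Dpsi (k - 1) x / Cpsi))"

lemma Phi_deriv: "(Phi has_real_derivative psi x / Cpsi) (at x)"
proof -
  have "((\<lambda>x. integral {-1..x} psi) has_real_derivative psi x) (at x)"
    by (rule antideriv_left0[of psi 0]) (simp_all add: psi_cont psi_zero)
  then show ?thesis unfolding Phi_def by (intro DERIV_cdivide)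
qed

lemma DPhi_smooth: "smooth_with DPhi"
proof -
  have s: "smooth_with (\<lambda>k x. Dpsi k x / Cpsi)"
    using smooth_with_cmult[OF Dpsi_smooth, of "1/Cpsi"] by simp
  have "smooth_with (\<lambda>k. if k = 0 then Phi else (\<lambda>x. Dpsi (k - 1) x / Cpsi))"
    by (rule smooth_with_antideriv[OF s]) (use Phi_deriv in \<open>simp add: Dpsi0\<close>)
  then show ?thesis unfolding DPhi_def by (simp add: fun_eq_iff)
qed

lemma DPhi0: "DPhi 0 = Phi" by (simp add: DPhi_def)
lemma DPhi1: "DPhi 1 x = psi x / Cpsi" by (simp add: DPhi_def Dpsi0)

lemma psi_integrable_on: "psi integrable_on {a..b}"
  by (simp add: integrable_continuous_real psi_cont)

lemma Phi_zero: "t \<le> 0 \<Longrightarrow> Phi t = 0"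
proof -
  assume "t \<le> 0"
  then have "integral {-1..t} psi = 0"
    by (intro integral_unique[OF has_integral_is_0]) (simp add: psi_zero)
  then show "Phi t = 0" unfolding Phi_def by simp
qed

lemma Phi_one: "t \<ge> 1 \<Longrightarrow> Phi t = 1"
proof -
  assume t: "t \<ge> 1"
  have "(psi has_integral Cpsi) {0..1}"
    unfolding Cpsi_def by (rule integrable_integral) (auto intro: psi_integrable_on)
  then have "(psi has_integral Cpsi) {-1..t}"
    by (rule has_integral_on_superset) (use t in \<open>auto simp: psi_zero\<close>)
  then show ?thesis using Cpsi_pos unfolding Phi_def by (simp add: integral_unique)
qed

lemma Phi_mono: "s \<le> t \<Longrightarrow> Phi s \<le> Phi t"
proof -
  assume st: "s \<le> t"
  have "integral {-1..s} psi \<le> integral {-1..t} psi"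
    by (rule integral_subset_le) (use st in \<open>auto simp: psi_integrable_on psi_nonneg\<close>)
  then show ?thesis unfolding Phi_def using Cpsi_pos by (simp add: divide_right_mono)
qed

lemma Phi_bounds: "0 \<le> Phi t" "Phi t \<le> 1"
proof -
  show "0 \<le> Phi t"
  proof (cases "t \<le> 0")
    case False then show ?thesis using Phi_mono[of 0 t] Phi_zero[of 0] by simp
  qed (simp add: Phi_zero)
  show "Phi t \<le> 1"
  proof (cases "t \<le> 1")
    case True then show ?thesis using Phi_mono[of t 1] Phi_one[of 1] by simp
  qed (simp add: Phi_one)
qed

lemma test_funI:
  assumes "smooth_with D" "\<And>x. \<bar>x\<bar> > R \<Longrightarrow> D 0 x = 0"
  shows "test_fun (D 0)"
  using assms unfolding test_fun_def smooth_with_def by blast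

lemma test_funE:
  assumes "test_fun \<phi>"
  obtains D R where "smooth_with D" "D 0 = \<phi>" "R > 0" "\<And>x. \<bar>x\<bar> > R \<Longrightarrow> \<phi> x = 0"
proof -
  obtain D R where D: "smooth_with D" "D 0 = \<phi>" and R: "\<And>x. \<bar>x\<bar> > R \<Longrightarrow> \<phi> x = 0"
    using assms unfolding test_fun_def smooth_with_def by blast
  show ?thesis
    by (rule that[OF D, of "max R 1"]) (use R in auto)
qed

lemma smooth_deriv: "smooth_with D \<Longrightarrow> deriv (D 0) x = D 1 x"
  using smooth_withD[of D 0 x] by (simp add: DERIV_imp_deriv)

lemma smooth_deriv_zero:
  assumes "smooth_with D" "\<And>x. \<bar>x\<bar> > R \<Longrightarrow> D 0 x = 0" "\<bar>x\<bar> > R"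
  shows "D 1 x = 0"
proof -
  have "((\<lambda>x. 0) has_real_derivative D 1 x) (at x)"
  proof (rule has_field_derivative_transform_within_open[where S="{x. \<bar>x\<bar> > R}"])
    show "(D 0 has_real_derivative D 1 x) (at x)" using smooth_withD[OF assms(1)] by simp
    show "open {x::real. \<bar>x\<bar> > R}" by (intro open_Collect_less continuous_intros)
  qed (use assms in auto)
  then show ?thesis using DERIV_const DERIV_unique by blast
qed

text \<open>approximate indicators of intervals\<close>
definition tau :: "real \<Rightarrow> real \<Rightarrow> real \<Rightarrow> real \<Rightarrow> real" where
  "tau n a b x = Phi (n*x + (-n*a)) - Phi (n*x + (-n*b))"

definition Dtau :: "real \<Rightarrow> real \<Rightarrow> real \<Rightarrow> nat \<Rightarrow> real \<Rightarrow> real" where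
  "Dtau n a b k x = n^k * DPhi k (n*x + (-n*a)) - n^k * DPhi k (n*x + (-n*b))"

lemma Dtau_smooth: "smooth_with (Dtau n a b)"
  unfolding Dtau_def[abs_def]
  by (rule smooth_with_diff[OF smooth_with_affine[OF DPhi_smooth] smooth_with_affine[OF DPhi_smooth]])

lemma Dtau0: "Dtau n a b 0 = tau n a b"
  by (simp add: Dtau_def tau_def DPhi0 fun_eq_iff)

lemma tau_zero_left:
  assumes "n \<ge> 0" "a < b" "x \<le> a"
  shows "tau n a b x = 0"
proof -
  have "n*x + (-n*a) \<le> 0" "n*x + (-n*b) \<le> 0"
    using assms mult_left_mono[of x a n] mult_left_mono[of x b n] by auto
  then show ?thesis by (simp add: tau_def Phi_zero)
qed

lemma tau_zero_right:
  assumes "n \<ge> 0" "a < b" "n * (x - b) \<ge> 1"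
  shows "tau n a b x = 0"
proof -
  have "n*(x-a) \<ge> n*(x-b)" using assms by (simp add: mult_left_mono)
  then have "n*x + (-n*a) \<ge> 1" "n*x + (-n*b) \<ge> 1" using assms by (auto simp: algebra_simps)
  then show ?thesis by (simp add: tau_def Phi_one)
qed

lemma tau_zero:
  assumes "n \<ge> 1" "a < b" "x \<le> a \<or> x \<ge> b + 1"
  shows "tau n a b x = 0"
proof (cases "x \<le> a")
  case True
  then show ?thesis using tau_zero_left assms by simp
next
  case False
  then have x: "x - b \<ge> 1" using assms by auto
  have "n*(x-b) \<ge> 1*1" by (rule mult_mono) (use assms x in auto)
  then show ?thesis using tau_zero_right assms by simp
qed

lemma tau_abs: "\<bar>tau n a b x\<bar> \<le> 1"
  using Phi_bounds[of "n*x + (-n*a)"] Phi_bounds[of "n*x + (-n*b)"] by (simp add: tau_def abs_le_iff)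

lemma tau_test: "n \<ge> 1 \<Longrightarrow> a < b \<Longrightarrow> test_fun (tau n a b)"
proof -
  assume "n \<ge> 1" "a < b"
  then have "\<And>x. \<bar>x\<bar> > \<bar>a\<bar> + \<bar>b\<bar> + 1 \<Longrightarrow> Dtau n a b 0 x = 0"
    unfolding Dtau0 by (intro tau_zero) auto
  from test_funI[OF Dtau_smooth this] show ?thesis by (simp add: Dtau0)
qed

lemma deriv_tau: "deriv (tau n a b) x = n * psi (n*x + (-n*a)) / Cpsi - n * psi (n*x + (-n*b)) / Cpsi"
  using smooth_deriv[OF Dtau_smooth, of n a b x] by (simp add: Dtau0 Dtau_def DPhi_def Dpsi0)

lemma tau_lim:
  assumes "a < b"
  shows "(\<lambda>m. tau (real (Suc m)) a b x) \<longlonglongrightarrow> indicator {a<..b} x"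
proof (cases "x \<le> a")
  case True
  then show ?thesis using tau_zero[of _ a b x] assms by (simp add: indicator_def)
next
  case False
  then have xa: "x > a" by simp
  obtain N :: nat where N: "N > 1 / (x - a)" using reals_Archimedean2 by blast
  show ?thesis
  proof (cases "x \<le> b")
    case True
    have "tau (real (Suc m)) a b x = 1" if "m \<ge> N" for m
    proof -
      have "real (Suc m) * (x - a) \<ge> 1"
      proof -
        have "real (Suc m) > 1/(x-a)" using N that by linarith
        then show ?thesis using xa by (simp add: field_simps)
      qed
      moreover have "real (Suc m) * (x - b) \<le> 0" using True by (simp add: mult_nonneg_nonpos)
      ultimately show ?thesis by (simp add: tau_def Phi_one Phi_zero algebra_simps)
    qed
    then have "\<forall>\<^sub>F m in sequentially. tau (real (Suc m)) a b x = 1"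
      unfolding eventually_sequentially by blast
    then show ?thesis using True xa by (simp add: indicator_def tendsto_eventually)
  next
    case False
    obtain M :: nat where M: "M > 1 / (x - b)" using reals_Archimedean2 by blast
    have "tau (real (Suc m)) a b x = 0" if "m \<ge> M" for m
    proof (rule tau_zero_right)
      have "real (Suc m) > 1/(x-b)" using M that by linarith
      then show "real (Suc m) * (x - b) \<ge> 1" using False by (simp add: field_simps)
    qed (use assms in auto)
    then have "\<forall>\<^sub>F m in sequentially. tau (real (Suc m)) a b x = 0"
      unfolding eventually_sequentially by blast
    then show ?thesis using False xa by (simp add: indicator_def tendsto_eventually)
  qed
qed

lemma smooth_borel: "smooth_with D \<Longrightarrow> D k \<in> borel_measurable borel"
  by (intro borel_measurable_continuous_onI smooth_with_cont)

lemma abs_le_sq: "\<bar>y::real\<bar> \<le> 1/4 + y\<^sup>2"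
proof -
  have "0 \<le> (\<bar>y\<bar> - 1/2)\<^sup>2" by simp
  also have "\<dots> = y\<^sup>2 - \<bar>y\<bar> + 1/4"
    by (simp add: power2_eq_square algebra_simps abs_mult_self_eq)
  finally show ?thesis by simp
qed

lemma loc_int_L2:
  fixes f :: "real \<Rightarrow> real"
  assumes "f \<in> borel_measurable lborel" "integrable lborel (\<lambda>x. (f x)\<^sup>2)"
  shows "set_integrable lborel {a..b} f"
  unfolding set_integrable_def
proof (rule Bochner_Integration.integrable_bound[where f="\<lambda>x. indicator {a..b} x + (f x)\<^sup>2 :: real"])
  have fin: "emeasure lborel {a..b} < \<infinity>" by (simp add: emeasure_lborel_Icc_eq)
  show "integrable lborel (\<lambda>x. indicator {a..b} x + (f x)\<^sup>2 :: real)"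
    by (intro Bochner_Integration.integrable_add integrable_real_indicator fin assms(2)) simp
  show "(\<lambda>x. indicator {a..b} x *\<^sub>R f x) \<in> borel_measurable lborel"
    using assms by measurable
  show "AE x in lborel. norm (indicator {a..b} x *\<^sub>R f x) \<le> norm (indicator {a..b} x + (f x)\<^sup>2 :: real)"
  proof (intro AE_I2)
    fix x
    have "\<bar>f x\<bar> \<le> 1 + (f x)\<^sup>2" using abs_le_sq[of "f x"] by simp
    then show "norm (indicator {a..b} x *\<^sub>R f x) \<le> norm (indicator {a..b} x + (f x)\<^sup>2 :: real)"
      by (auto simp: indicator_def)
  qed
qed

lemma FL0:
  fixes h :: "real \<Rightarrow> real"
  assumes li: "\<And>a b. set_integrable lborel {a..b} h"
    and z: "\<And>a b. a < b \<Longrightarrow> (LINT x:{a..b}|lborel. h x) = 0"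
  shows "AE x in lborel. h x = 0"
proof -
  have "\<And>a b. h integrable_on cbox a b"
    using set_borel_integral_eq_integral(1)[OF li] by simp
  then obtain N where N: "negligible N"
    and P: "\<And>x e. \<lbrakk>x \<notin> N; 0 < e\<rbrakk> \<Longrightarrow>
               \<exists>d>0. \<forall>k. 0 < k \<and> k < d \<longrightarrow>
                         norm(integral (cbox x (x + k *\<^sub>R One)) h /\<^sub>R k ^ DIM(real) - h x) < e"
    by (rule integrable_ccontinuous_explicit) blast
  have "h x = 0" if xN: "x \<notin> N" for x
  proof (rule ccontr)
    assume "h x \<noteq> 0"
    then obtain d where d: "d > 0" and dd: "\<forall>k. 0 < k \<and> k < d \<longrightarrow>
         norm(integral (cbox x (x + k *\<^sub>R One)) h /\<^sub>R k ^ DIM(real) - h x) < \<bar>h x\<bar>"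
      using P[OF xN, of "\<bar>h x\<bar>"] by auto
    have "norm(integral (cbox x (x + (d/2) *\<^sub>R One)) h /\<^sub>R (d/2) ^ DIM(real) - h x) < \<bar>h x\<bar>"
      by (rule dd[rule_format]) (use d in simp)
    moreover have "integral (cbox x (x + (d/2) *\<^sub>R One)) h = 0"
    proof -
      have "integral (cbox x (x + (d/2) *\<^sub>R One)) h = integral {x..x+d/2} h" by simp
      also have "\<dots> = (LINT y:{x..x+d/2}|lborel. h y)"
        using set_borel_integral_eq_integral(2)[OF li] by simp
      also have "\<dots> = 0" using z d by simp
      finally show ?thesis .
    qed
    ultimately show False by simp
  qed
  moreover have "AE x in lebesgue. x \<notin> N"
    using N by (simp add: AE_not_in negligible_iff_null_sets)
  ultimately have "AE x in lebesgue. h x = 0" by (auto elim: AE_mp)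
  then show ?thesis by (simp add: AE_completion_iff)
qed

lemma Icc_Ioc_integral:
  fixes h :: "real \<Rightarrow> real"
  assumes "a \<le> b"
  shows "(LINT x:{a..b}|lborel. h x) = (LINT x:{a<..b}|lborel. h x)"
  using interval_integral_Icc[OF assms, of h] interval_integral_Ioc[OF assms, of h] by simp

lemma FL:
  fixes h :: "real \<Rightarrow> real"
  assumes hm: "h \<in> borel_measurable lborel"
    and li: "\<And>a b. set_integrable lborel {a..b} h"
    and z: "\<And>\<phi>. test_fun \<phi> \<Longrightarrow> (LINT x|lborel. h x * \<phi> x) = 0"
  shows "AE x in lborel. h x = 0"
proof (rule FL0[OF li])
  fix a b :: real assume ab: "a < b"
  define s where "s m x = h x * tau (real (Suc m)) a b x" for m x
  define f where "f x = h x * indicator {a<..b} x" for x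
  define w where "w x = \<bar>h x\<bar> * indicator {a..b+1} x" for x
  have tm: "tau n a b \<in> borel_measurable borel" for n
    using smooth_borel[OF Dtau_smooth, of n a b 0] by (simp add: Dtau0)
  have lim: "(\<lambda>m. integral\<^sup>L lborel (s m)) \<longlonglongrightarrow> integral\<^sup>L lborel f"
  proof (rule integral_dominated_convergence[where w=w])
    show "f \<in> borel_measurable lborel" unfolding f_def using hm by measurable
    show "s m \<in> borel_measurable lborel" for m unfolding s_def using hm tm by measurable
    have "integrable lborel (\<lambda>x. \<bar>indicator {a..b+1} x *\<^sub>R h x\<bar>)"
      using li[of a "b+1"] unfolding set_integrable_def by (rule integrable_abs)
    moreover have "(\<lambda>x. \<bar>indicator {a..b+1} x *\<^sub>R h x\<bar>) = w"
      unfolding w_def by (auto simp: indicator_def fun_eq_iff)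
    ultimately show "integrable lborel w" by simp
    show "AE x in lborel. (\<lambda>m. s m x) \<longlonglongrightarrow> f x"
      unfolding s_def f_def by (intro AE_I2 tendsto_mult tendsto_const tau_lim ab)
    show "AE x in lborel. norm (s m x) \<le> w x" for m
    proof (intro AE_I2)
      fix x
      show "norm (s m x) \<le> w x"
      proof (cases "x \<in> {a..b+1}")
        case True
        then show ?thesis unfolding s_def w_def
          using tau_abs[of "real (Suc m)" a b x] by (simp add: abs_mult mult_left_le)
      next
        case False
        then have "tau (real (Suc m)) a b x = 0" using ab by (intro tau_zero) auto
        then show ?thesis unfolding s_def w_def by simp
      qed
    qed
  qed
  moreover have "integral\<^sup>L lborel (s m) = 0" for m
    unfolding s_def by (rule z[OF tau_test]) (use ab in auto)
  ultimately have "integral\<^sup>L lborel f = 0"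
    using LIMSEQ_unique[OF lim] by (simp add: LIMSEQ_const_iff)
  then have "(LINT x:{a<..b}|lborel. h x) = 0"
    unfolding f_def set_lebesgue_integral_def by (simp add: mult.commute)
  then show "(LINT x:{a..b}|lborel. h x) = 0" using Icc_Ioc_integral[of a b h] ab by simp
qed

lemma cs_mult_integrable:
  fixes h \<phi> :: "real \<Rightarrow> real"
  assumes hm: "h \<in> borel_measurable lborel" and li: "\<And>a b. set_integrable lborel {a..b} h"
    and pc: "continuous_on UNIV \<phi>" and z: "\<And>x. \<bar>x\<bar> > R \<Longrightarrow> \<phi> x = 0"
  shows "integrable lborel (\<lambda>x. h x * \<phi> x)"
proof -
  have "compact (\<phi> ` {-R..R})"
    by (rule compact_continuous_image[OF continuous_on_subset[OF pc]]) auto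
  then obtain B where B: "\<And>x. x \<in> {-R..R} \<Longrightarrow> \<bar>\<phi> x\<bar> \<le> B"
    using compact_imp_bounded[of "\<phi> ` {-R..R}"] unfolding bounded_iff by force
  have int: "integrable lborel (\<lambda>x. B * \<bar>indicator {-R..R} x *\<^sub>R h x\<bar>)"
    using li[of "-R" R] unfolding set_integrable_def by (intro integrable_mult_right integrable_abs)
  show ?thesis
  proof (rule Bochner_Integration.integrable_bound[OF int])
    show "(\<lambda>x. h x * \<phi> x) \<in> borel_measurable lborel"
      using hm borel_measurable_continuous_onI[OF pc] by measurable
    show "AE x in lborel. norm (h x * \<phi> x) \<le> norm (B * \<bar>indicator {- R..R} x *\<^sub>R h x\<bar>)"
    proof (intro AE_I2)
      fix x
      show "norm (h x * \<phi> x) \<le> norm (B * \<bar>indicator {- R..R} x *\<^sub>R h x\<bar>)"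
      proof (cases "x \<in> {-R..R}")
        case True
        then have "\<bar>h x * \<phi> x\<bar> \<le> \<bar>h x\<bar> * B" using B[OF True] by (simp add: abs_mult mult_left_mono)
        moreover have "B * \<bar>h x\<bar> \<le> \<bar>B\<bar> * \<bar>h x\<bar>" by (simp add: mult_right_mono)
        ultimately show ?thesis using True by (simp add: abs_mult mult.commute)
      next
        case False
        then have "\<bar>x\<bar> > R" by auto
        then show ?thesis using z[of x] by simp
      qed
    qed
  qed
qed

lemma DBR:
  fixes h :: "real \<Rightarrow> real"
  assumes hm: "h \<in> borel_measurable lborel"
    and li: "\<And>a b. set_integrable lborel {a..b} h"
    and z: "\<And>\<phi>. test_fun \<phi> \<Longrightarrow> (LINT x|lborel. h x * deriv \<phi> x) = 0"
  shows "\<exists>c. AE x in lborel. h x = c"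
proof -
  define c where "c = (LINT x|lborel. h x * (psi x / Cpsi))"
  have psic: "continuous_on UNIV (\<lambda>x. psi x / Cpsi)"
    using Cpsi_pos by (intro continuous_intros psi_cont) auto
  have hpsi: "integrable lborel (\<lambda>x. h x * (psi x / Cpsi))"
    by (rule cs_mult_integrable[OF hm li psic, of 1]) (auto intro!: psi_zero)
  have "AE x in lborel. h x - c = 0"
  proof (rule FL)
    show "(\<lambda>x. h x - c) \<in> borel_measurable lborel" using hm by measurable
    show "set_integrable lborel {a..b} (\<lambda>x. h x - c)" for a b
    proof -
      have "set_integrable lborel {a..b} (\<lambda>x. c)"
        by (rule borel_integrable_atLeastAtMost') simp
      then show ?thesis using li[of a b] by (rule set_integral_diff(1)[rotated])
    qed
    fix g :: "real \<Rightarrow> real" assume tg: "test_fun g"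
    obtain D R where D: "smooth_with D" "D 0 = g" and R: "R > 0" "\<And>x. \<bar>x\<bar> > R \<Longrightarrow> g x = 0"
      using test_funE[OF tg] by blast
    have chic: "continuous_on UNIV g" using smooth_with_cont[OF D(1), of UNIV 0] D(2) by simp
    have chii: "integrable lborel g"
      by (rule cs_integrable[OF continuous_on_subset[OF chic], of "-R" R]) (auto intro: R(2))
    have hchi: "integrable lborel (\<lambda>x. h x * g x)"
      by (rule cs_mult_integrable[OF hm li chic R(2)])
    define m where "m = (LINT x|lborel. g x)"
    define Df where "Df k x = D k x - (m/Cpsi) * Dpsi k x" for k x
    have Dfs: "smooth_with Df"
      unfolding Df_def[abs_def] by (intro smooth_with_diff D(1) smooth_with_cmult Dpsi_smooth)
    have Df0: "Df 0 x = g x - m * (psi x / Cpsi)" for x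
      by (simp add: Df_def D(2) Dpsi0)
    have Df0z: "Df 0 x = 0" if "x \<notin> {-R-1..R+1}" for x
      using that R by (auto simp: Df0 psi_zero intro!: R(2))
    have Df0z': "Df 0 x = 0" if "x < -R" for x
    proof -
      have "g x = 0" using that R by (intro R(2)) auto
      moreover have "psi x = 0" using that R by (intro psi_zero) auto
      ultimately show ?thesis by (simp add: Df0)
    qed
    have Df0c: "continuous_on UNIV (Df 0)" by (rule smooth_with_cont[OF Dfs])
    define F where "F x = integral {-R-1..x} (Df 0)" for x
    have Fd: "(F has_real_derivative Df 0 x) (at x)" for x
      unfolding F_def by (rule antideriv_left0[OF Df0c, of "-R"]) (use Df0z' R in auto)
    define DF where "DF = (\<lambda>k. if k = 0 then F else Df (k - 1))"
    have DFs: "smooth_with DF" unfolding DF_def by (rule smooth_with_antideriv[OF Dfs Fd])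
    have intDf0: "(LINT x|lborel. Df 0 x) = 0"
    proof -
      have "(LINT x|lborel. Df 0 x) = (LINT x|lborel. g x - m * (psi x / Cpsi))"
        by (simp add: Df0)
      also have "\<dots> = m - m * ((LINT x|lborel. psi x) / Cpsi)"
        using chii integrable_psi by (simp add: m_def)
      also have "\<dots> = 0" using Cpsi_pos by (simp add: LINT_psi)
      finally show ?thesis .
    qed
    have Fz: "F x = 0" if "\<bar>x\<bar> > R + 1" for x
    proof (cases "x < 0")
      case True
      then have "{-R-1..x} = {}" using that by auto
      then show ?thesis by (simp add: F_def)
    next
      case False
      then have x: "x > R + 1" using that by auto
      have "(Df 0 has_integral integral {-R-1..R+1} (Df 0)) {-R-1..R+1}"
        by (rule integrable_integral[OF integrable_continuous_real[OF continuous_on_subset[OF Df0c]]]) auto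
      then have "(Df 0 has_integral integral {-R-1..R+1} (Df 0)) {-R-1..x}"
        by (rule has_integral_on_superset) (use x Df0z in auto)
      moreover have "integral {-R-1..R+1} (Df 0) = 0"
        using cs_LINT[OF continuous_on_subset[OF Df0c] Df0z, of "-R-1" "R+1"] intDf0 by simp
      ultimately show ?thesis by (simp add: F_def integral_unique)
    qed
    have "test_fun F" using test_funI[OF DFs, of "R+1"] Fz by (simp add: DF_def)
    then have "(LINT x|lborel. h x * deriv F x) = 0" by (rule z)
    moreover have "deriv F x = Df 0 x" for x
      using smooth_deriv[OF DFs, of x] by (simp add: DF_def)
    ultimately have "(LINT x|lborel. h x * g x - m * (h x * (psi x / Cpsi))) = 0"
      by (simp add: Df0 algebra_simps)
    moreover have "(LINT x|lborel. h x * g x - m * (h x * (psi x / Cpsi))) =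
        (LINT x|lborel. h x * g x) - (LINT x|lborel. m * (h x * (psi x / Cpsi)))"
      by (rule Bochner_Integration.integral_diff[OF hchi integrable_mult_right[OF hpsi]])
    moreover have "(LINT x|lborel. m * (h x * (psi x / Cpsi))) = m * c"
      unfolding c_def by (rule integral_mult_right_zero)
    ultimately have "(LINT x|lborel. h x * g x) = m * c" by linarith
    then show "(LINT x|lborel. (h x - c) * g x) = 0"
      using hchi chii by (simp add: left_diff_distrib m_def)
  qed
  then show ?thesis by auto
qed

lemma prod_integrable:
  fixes f q :: "real \<Rightarrow> real"
  assumes f: "integrable lborel f" and q: "integrable lborel q"
  shows "integrable (lborel \<Otimes>\<^sub>M lborel) (\<lambda>(x,y). f x * q y)"
proof (rule integrableI_bounded)
  have fm: "f \<in> borel_measurable borel" and qm: "q \<in> borel_measurable borel"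
    using f q by (auto dest: borel_measurable_integrable)
  show "(\<lambda>(x,y). f x * q y) \<in> borel_measurable (lborel \<Otimes>\<^sub>M lborel)"
    using fm qm by measurable
  have "(\<integral>\<^sup>+ p. ennreal (norm ((\<lambda>(x,y). f x * q y) p)) \<partial>(lborel \<Otimes>\<^sub>M lborel))
      = (\<integral>\<^sup>+ x. (\<integral>\<^sup>+ y. ennreal (norm ((\<lambda>(x,y). f x * q y) (x,y))) \<partial>lborel) \<partial>lborel)"
    by (rule lborel.nn_integral_fst[symmetric]) (use fm qm in measurable)
  also have "\<dots> = (\<integral>\<^sup>+ x. (\<integral>\<^sup>+ y. ennreal (\<bar>f x\<bar>) * ennreal (\<bar>q y\<bar>) \<partial>lborel) \<partial>lborel)"
    by (simp add: abs_mult ennreal_mult)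
  also have "\<dots> = (\<integral>\<^sup>+ x. ennreal (\<bar>f x\<bar>) * (\<integral>\<^sup>+ y. ennreal (\<bar>q y\<bar>) \<partial>lborel) \<partial>lborel)"
    using qm by (simp add: nn_integral_cmult)
  also have "\<dots> = (\<integral>\<^sup>+ x. ennreal (\<bar>f x\<bar>) \<partial>lborel) * (\<integral>\<^sup>+ y. ennreal (\<bar>q y\<bar>) \<partial>lborel)"
    using fm by (simp add: nn_integral_multc)
  also have "\<dots> < \<infinity>"
    using f q by (auto simp: integrable_iff_bounded ennreal_mult_less_top)
  finally show "(\<integral>\<^sup>+ p. ennreal (norm ((\<lambda>(x,y). f x * q y) p)) \<partial>(lborel \<Otimes>\<^sub>M lborel)) < \<infinity>" .
qed

lemma FTC_smooth:
  assumes D: "smooth_with D" and ab: "a \<le> b"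
  shows "(LINT x:{a..b}|lborel. D (Suc k) x) = D k b - D k a"
proof -
  have "(LBINT x=a..b. D (Suc k) x) = D k b - D k a"
  proof (rule interval_integral_FTC_finite)
    show "continuous_on {min a b..max a b} (D (Suc k))" by (rule smooth_with_cont[OF D])
    fix x
    have "(D k has_vector_derivative D (Suc k) x) (at x)"
      using smooth_withD[OF D] by (simp add: has_real_derivative_iff_has_vector_derivative)
    then show "(D k has_vector_derivative D (Suc k) x) (at x within {min a b..max a b})"
      by (rule has_vector_derivative_at_within)
  qed
  then show ?thesis using interval_integral_Icc[OF ab, of "D (Suc k)"] by simp
qed

lemma li_interval:
  fixes g :: "real \<Rightarrow> real"
  assumes li: "\<And>a b. set_integrable lborel {a..b} g"
  shows "interval_lebesgue_integrable lborel (ereal a) (ereal b) g"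
  unfolding interval_lebesgue_integrable_def
proof (cases "a \<le> b")
  case True
  have "set_integrable lborel (einterval (ereal a) (ereal b)) g"
    by (rule set_integrable_subset[OF li[of a b]]) (auto simp: einterval_iff)
  then show "if ereal a \<le> ereal b then set_integrable lborel (einterval (ereal a) (ereal b)) g
     else set_integrable lborel (einterval (ereal b) (ereal a)) g" using True by simp
next
  case False
  have "set_integrable lborel (einterval (ereal b) (ereal a)) g"
    by (rule set_integrable_subset[OF li[of b a]]) (auto simp: einterval_iff)
  then show "if ereal a \<le> ereal b then set_integrable lborel (einterval (ereal a) (ereal b)) g
     else set_integrable lborel (einterval (ereal b) (ereal a)) g" using False by simp
qed

lemma smooth_bounded:
  assumes D: "smooth_with D" and z: "\<And>x. \<bar>x\<bar> > R \<Longrightarrow> D k x = 0"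
  obtains B where "B \<ge> 0" "\<And>x. \<bar>D k x\<bar> \<le> B"
proof -
  have "compact (D k ` {-R..R})"
    by (rule compact_continuous_image[OF smooth_with_cont[OF D]]) auto
  then obtain B where B: "\<And>x. x \<in> {-R..R} \<Longrightarrow> \<bar>D k x\<bar> \<le> B"
    using compact_imp_bounded[of "D k ` {-R..R}"] unfolding bounded_iff by force
  show ?thesis
  proof (rule that[of "max B 0"])
    fix x show "\<bar>D k x\<bar> \<le> max B 0"
    proof (cases "x \<in> {-R..R}")
      case True then show ?thesis using B[OF True] by simp
    next
      case False then have "\<bar>x\<bar> > R" by auto
      then show ?thesis using z by simp
    qed
  qed simp
qed

lemma IBP:
  fixes g \<phi> :: "real \<Rightarrow> real"
  assumes gm: "g \<in> borel_measurable lborel"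
    and li: "\<And>a b. set_integrable lborel {a..b} g"
    and tp: "test_fun \<phi>"
  shows "(LINT x|lborel. (LBINT y=0..x. g y) * deriv \<phi> x) = - (LINT x|lborel. g x * \<phi> x)"
proof -
  obtain D R0 where D: "smooth_with D" "D 0 = \<phi>" and R0: "R0 > 0" "\<And>x. \<bar>x\<bar> > R0 \<Longrightarrow> \<phi> x = 0"
    using test_funE[OF tp] by blast
  define S where "S = R0 + 1"
  have S: "S > 0" using R0 by (simp add: S_def)
  have phz: "\<phi> x = 0" if "\<bar>x\<bar> \<ge> S" for x using that R0 by (intro R0(2)) (simp add: S_def)
  have D1z: "D 1 x = 0" if "\<bar>x\<bar> > R0" for x
    by (rule smooth_deriv_zero[OF D(1) _ that]) (use R0 D in auto)
  have D1zS: "D 1 x = 0" if "\<bar>x\<bar> \<ge> S" for x using that by (intro D1z) (simp add: S_def)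
  have D1zS': "D (Suc 0) x = 0" if "\<bar>x\<bar> \<ge> S" for x using D1zS[OF that] by simp
  have dphi: "deriv \<phi> x = D 1 x" for x using smooth_deriv[OF D(1)] D(2) by simp
  obtain B where B: "B \<ge> 0" "\<And>x. \<bar>D 1 x\<bar> \<le> B"
    using smooth_bounded[OF D(1) D1z] by blast
  have D1m: "D 1 \<in> borel_measurable borel" by (rule smooth_borel[OF D(1)])
  have gm': "g \<in> borel_measurable borel" using gm by simp
  define k where "k x y = (if -S \<le> y \<and> y \<le> x \<and> x \<le> S then D 1 x * g y else 0)" for x y
  have kint: "integrable (lborel \<Otimes>\<^sub>M lborel) (\<lambda>(x,y). k x y)"
  proof (rule Bochner_Integration.integrable_bound[OF prod_integrable[of "\<lambda>x. B * indicator {-S..S} x" "\<lambda>y. indicator {-S..S} y *\<^sub>R g y"]])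
    show "integrable lborel (\<lambda>x. B * indicator {-S..S} x :: real)"
      by (intro integrable_mult_right integrable_real_indicator) (auto simp: emeasure_lborel_Icc_eq)
    show "integrable lborel (\<lambda>y. indicator {-S..S} y *\<^sub>R g y)"
      using li[of "-S" S] by (simp add: set_integrable_def)
    show "(\<lambda>(x,y). k x y) \<in> borel_measurable (lborel \<Otimes>\<^sub>M lborel)"
      unfolding k_def using D1m gm' by measurable
    show "AE p in lborel \<Otimes>\<^sub>M lborel. norm ((\<lambda>(x,y). k x y) p) \<le> norm ((\<lambda>(x,y). B * indicator {-S..S} x * (indicator {-S..S} y *\<^sub>R g y)) p)"
    proof (intro AE_I2)
      fix p :: "real \<times> real"
      obtain x y where p: "p = (x,y)" by (cases p)
      show "norm ((\<lambda>(x,y). k x y) p) \<le> norm ((\<lambda>(x,y). B * indicator {-S..S} x * (indicator {-S..S} y *\<^sub>R g y)) p)"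
      proof (cases "-S \<le> y \<and> y \<le> x \<and> x \<le> S")
        case True
        then have "\<bar>D 1 x * g y\<bar> \<le> B * \<bar>g y\<bar>" using B by (simp add: abs_mult mult_right_mono)
        then show ?thesis using True B p by (simp add: k_def indicator_def abs_mult)
      next
        case False then have "k x y = 0" unfolding k_def by meson
        then show ?thesis using p by simp
      qed
    qed
  qed
  define GS where "GS x = (LINT y:{-S..x}|lborel. g y)" for x
  define I where "I x = (if -S \<le> x \<and> x \<le> S then D 1 x * GS x else 0)" for x
  have inner_y: "(LINT y|lborel. k x y) = I x" for x
  proof (cases "-S \<le> x \<and> x \<le> S")
    case True
    have "(LINT y|lborel. k x y) = (LINT y|lborel. (indicator {-S..x} y *\<^sub>R g y) * D 1 x)"
      by (rule Bochner_Integration.integral_cong) (use True in \<open>auto simp: k_def indicator_def\<close>)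
    also have "\<dots> = GS x * D 1 x"
      unfolding GS_def set_lebesgue_integral_def by (rule integral_mult_left_zero)
    finally show ?thesis using True by (simp add: I_def)
  next
    case False
    then have "k x y = 0" for y by (auto simp: k_def)
    moreover have "I x = 0" unfolding I_def using False by auto
    ultimately show ?thesis by simp
  qed
  have inner_x: "(LINT x|lborel. k x y) = - (g y * \<phi> y)" for y
  proof (cases "-S \<le> y \<and> y \<le> S")
    case True
    have "(LINT x|lborel. k x y) = (LINT x|lborel. (indicator {y..S} x *\<^sub>R D 1 x) * g y)"
      by (rule Bochner_Integration.integral_cong) (use True in \<open>auto simp: k_def indicator_def\<close>)
    also have "\<dots> = (LINT x:{y..S}|lborel. D (Suc 0) x) * g y"
      unfolding set_lebesgue_integral_def by (simp add: integral_mult_left_zero)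
    also have "\<dots> = (D 0 S - D 0 y) * g y"
      using FTC_smooth[OF D(1), of y S 0] True by simp
    also have "\<dots> = - (g y * \<phi> y)" using phz[of S] S D(2) by simp
    finally show ?thesis .
  next
    case False
    then have "k x y = 0" for x by (auto simp: k_def)
    moreover have "\<phi> y = 0" using False by (intro phz) auto
    ultimately show ?thesis by simp
  qed
  have Iint: "integrable lborel I"
    using lborel_pair.integrable_fst'[OF kint] by (simp add: inner_y)
  have fub: "(LINT x|lborel. I x) = - (LINT y|lborel. g y * \<phi> y)"
    using lborel_pair.Fubini_integral[OF kint] by (simp add: inner_y inner_x)
  define K where "K = GS 0"
  have Gx: "(LBINT y=0..x. g y) = GS x - K" if "-S \<le> x" for x
  proof -
    have L: "interval_lebesgue_integrable lborel (ereal (min (-S) (min 0 x))) (ereal (max (-S) (max 0 x))) g"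
      by (rule li_interval[OF li])
    have "(LBINT y=(-S)..0. g y) + (LBINT y=0..x. g y) = (LBINT y=(-S)..x. g y)"
      by (rule interval_integral_sum) (use L in \<open>simp add: zero_ereal_def\<close>)
    moreover have "(LBINT y=(-S)..0. g y) = K" unfolding K_def GS_def
      using interval_integral_Icc[of "-S" 0 g] S by (simp add: zero_ereal_def)
    moreover have "(LBINT y=(-S)..x. g y) = GS x" unfolding GS_def
      using interval_integral_Icc[of "-S" x g] that by simp
    ultimately show ?thesis by simp
  qed
  have pw: "(LBINT y=0..x. g y) * deriv \<phi> x = I x - K * D 1 x" for x
  proof (cases "-S \<le> x \<and> x \<le> S")
    case True
    have e: "(LBINT y=0..x. g y) = GS x - K" using Gx True by simp
    show ?thesis unfolding e I_def dphi using True by (simp add: algebra_simps)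
  next
    case False then have "D 1 x = 0" by (intro D1zS) auto
    then show ?thesis using False by (simp add: I_def dphi)
  qed
  have D1int: "integrable lborel (D 1)"
    by (rule cs_integrable[OF smooth_with_cont[OF D(1)], of "-S" S]) (auto simp: abs_if intro!: D1zS')
  have D1int0: "(LINT x|lborel. D 1 x) = 0"
  proof -
    have "(LINT x|lborel. D 1 x) = (LINT x:{-S..S}|lborel. D (Suc 0) x)"
      unfolding set_lebesgue_integral_def
    proof (rule Bochner_Integration.integral_cong)
      fix x show "D 1 x = indicator {-S..S} x *\<^sub>R D (Suc 0) x"
      proof (cases "x \<in> {-S..S}")
        case False
        then have "\<bar>x\<bar> \<ge> S" by auto
        then show ?thesis using D1zS False by simp
      qed simp
    qed simp
    also have "\<dots> = D 0 S - D 0 (-S)" using FTC_smooth[OF D(1), of "-S" S 0] S by simp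
    also have "\<dots> = 0" using phz[of S] phz[of "-S"] S D(2) by simp
    finally show ?thesis .
  qed
  have "(LINT x|lborel. (LBINT y=0..x. g y) * deriv \<phi> x) = (LINT x|lborel. I x - K * D 1 x)"
    by (simp add: pw)
  also have "\<dots> = (LINT x|lborel. I x) - K * (LINT x|lborel. D 1 x)"
    using Iint D1int by simp
  also have "\<dots> = - (LINT y|lborel. g y * \<phi> y)" using fub D1int0 by simp
  finally show ?thesis .
qed

lemma G_split:
  fixes g :: "real \<Rightarrow> real"
  assumes li: "\<And>a b. set_integrable lborel {a..b} g" and ax: "a \<le> x" and a0: "a \<le> 0"
  shows "(LBINT y=0..x. g y) = (LINT y:{a..x}|lborel. g y) - (LINT y:{a..0}|lborel. g y)"
proof -
  have L: "interval_lebesgue_integrable lborel (ereal (min a (min 0 x))) (ereal (max a (max 0 x))) g"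
    by (rule li_interval[OF li])
  have "(LBINT y=a..0. g y) + (LBINT y=0..x. g y) = (LBINT y=a..x. g y)"
    by (rule interval_integral_sum) (use L in \<open>simp add: zero_ereal_def\<close>)
  moreover have "(LBINT y=a..0. g y) = (LINT y:{a..0}|lborel. g y)"
    using interval_integral_Icc[of a 0 g] a0 by (simp add: zero_ereal_def)
  moreover have "(LBINT y=a..x. g y) = (LINT y:{a..x}|lborel. g y)"
    using interval_integral_Icc[of a x g] ax by simp
  ultimately show ?thesis by simp
qed

lemma G_cont:
  fixes g :: "real \<Rightarrow> real"
  assumes li: "\<And>a b. set_integrable lborel {a..b} g"
  shows "continuous_on UNIV (\<lambda>x::real. LBINT y=0..x. g y)"
proof (rule continuous_at_imp_continuous_on, intro ballI)
  fix x :: real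
  define N where "N = \<bar>x\<bar> + 1"
  have N: "N > 0" "-N < x" "x < N" by (auto simp: N_def)
  have "continuous_on {-N..N} (\<lambda>z. integral {-N..z} g)"
    by (rule indefinite_integral_continuous_1) (use set_borel_integral_eq_integral(1)[OF li] in simp)
  then have c: "continuous_on {-N..N} (\<lambda>z. integral {-N..z} g - integral {-N..0} g)"
    by (intro continuous_intros)
  have "continuous_on {-N..N} (\<lambda>z::real. LBINT y=0..z. g y)"
  proof (rule continuous_on_eq[OF c])
    fix z assume z: "z \<in> {-N..N}"
    have "(LBINT y=0..z. g y) = (LINT y:{-N..z}|lborel. g y) - (LINT y:{-N..0}|lborel. g y)"
      by (rule G_split[OF li]) (use z N in auto)
    also have "\<dots> = integral {-N..z} g - integral {-N..0} g"
      using set_borel_integral_eq_integral(2)[OF li] by simp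
    finally show "integral {-N..z} g - integral {-N..0} g = (LBINT y=0..z. g y)" by simp
  qed
  moreover have "x \<in> interior {-N..N}" using N by simp
  ultimately show "isCont (\<lambda>x::real. LBINT y=0..x. g y) x"
    by (rule continuous_on_interior)
qed

lemma cont_li:
  fixes f :: "real \<Rightarrow> real"
  shows "continuous_on UNIV f \<Longrightarrow> set_integrable lborel {a..b} f"
  by (rule borel_integrable_atLeastAtMost') (rule continuous_on_subset, auto)

lemma rep:
  fixes u g :: "real \<Rightarrow> real"
  assumes um: "u \<in> borel_measurable lborel" and liu: "\<And>a b. set_integrable lborel {a..b} u"
    and gm: "g \<in> borel_measurable lborel" and lig: "\<And>a b. set_integrable lborel {a..b} g"
    and wd: "weak_deriv u g"
  shows "\<exists>c. AE x in lborel. u x = c + (LBINT y=0..x. g y)"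
proof -
  define G where "G x = (LBINT y=0..x. g y)" for x :: real
  have Gc: "continuous_on UNIV G" unfolding G_def by (rule G_cont[OF lig])
  have Gm: "G \<in> borel_measurable lborel" using borel_measurable_continuous_onI[OF Gc] by simp
  have "\<exists>c. AE x in lborel. u x - G x = c"
  proof (rule DBR)
    show "(\<lambda>x. u x - G x) \<in> borel_measurable lborel" using um Gm by measurable
    show "set_integrable lborel {a..b} (\<lambda>x. u x - G x)" for a b
      using liu[of a b] cont_li[OF Gc, of a b] by (rule set_integral_diff(1))
    fix \<phi> :: "real \<Rightarrow> real" assume tp: "test_fun \<phi>"
    obtain D R where D: "smooth_with D" "D 0 = \<phi>" and R: "R > 0" "\<And>x. \<bar>x\<bar> > R \<Longrightarrow> \<phi> x = 0"
      using test_funE[OF tp] by blast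
    have dphi: "deriv \<phi> = D 1" using smooth_deriv[OF D(1)] D(2) by auto
    have D1z: "\<bar>x\<bar> > R \<Longrightarrow> D 1 x = 0" for x
      by (rule smooth_deriv_zero[OF D(1)]) (use R D in auto)
    have D1c: "continuous_on UNIV (D 1)" by (rule smooth_with_cont[OF D(1)])
    have i1: "integrable lborel (\<lambda>x. u x * D 1 x)"
      by (rule cs_mult_integrable[OF um liu D1c D1z])
    have i2: "integrable lborel (\<lambda>x. G x * D 1 x)"
      by (rule cs_mult_integrable[OF Gm cont_li[OF Gc] D1c D1z])
    have "(LINT x|lborel. (u x - G x) * deriv \<phi> x) = (LINT x|lborel. u x * D 1 x) - (LINT x|lborel. G x * D 1 x)"
      using i1 i2 by (simp add: dphi left_diff_distrib)
    also have "(LINT x|lborel. u x * D 1 x) = - (LINT x|lborel. g x * \<phi> x)"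
    proof -
      have "(LINT x|lborel. u x * deriv \<phi> x) = - (LINT x|lborel. g x * \<phi> x)"
        using wd tp unfolding weak_deriv_def by blast
      then show ?thesis unfolding dphi .
    qed
    also have "(LINT x|lborel. G x * D 1 x) = - (LINT x|lborel. g x * \<phi> x)"
      using IBP[OF gm lig tp] unfolding G_def dphi by simp
    finally show "(LINT x|lborel. (u x - G x) * deriv \<phi> x) = 0" by simp
  qed
  then obtain c where "AE x in lborel. u x - G x = c" by blast
  then have "AE x in lborel. u x = c + G x" by eventually_elim simp
  then show ?thesis unfolding G_def by blast
qed

lemma L2_li: "L2 f \<Longrightarrow> set_integrable lborel {a..b} f"
  unfolding L2_def by (intro loc_int_L2) auto

lemma L2_m: "L2 f \<Longrightarrow> f \<in> borel_measurable lborel"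
  unfolding L2_def by auto

lemma G_diff:
  fixes g :: "real \<Rightarrow> real"
  assumes li: "\<And>a b. set_integrable lborel {a..b} g" and xy: "x \<le> y"
  shows "(LBINT t=0..y. g t) - (LBINT t=0..x. g t) = (LINT t:{x..y}|lborel. g t)"
proof -
  have L: "interval_lebesgue_integrable lborel (ereal (min 0 (min x y))) (ereal (max 0 (max x y))) g"
    by (rule li_interval[OF li])
  have "(LBINT t=0..x. g t) + (LBINT t=x..y. g t) = (LBINT t=0..y. g t)"
    by (rule interval_integral_sum) (use L in \<open>simp add: zero_ereal_def\<close>)
  moreover have "(LBINT t=x..y. g t) = (LINT t:{x..y}|lborel. g t)"
    using interval_integral_Icc[of x y g] xy by simp
  ultimately show ?thesis by simp
qed

lemma G_deriv:
  fixes g :: "real \<Rightarrow> real"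
  assumes gc: "continuous_on UNIV g"
  shows "((\<lambda>x::real. LBINT t=0..x. g t) has_real_derivative g x) (at x)"
proof -
  define N where "N = \<bar>x\<bar> + 1"
  have N: "-N \<le> 0" "0 \<le> N" "-N \<le> x" "x \<le> N" "x \<in> interior {-N..N}" by (auto simp: N_def)
  have "((\<lambda>u. LBINT t=ereal 0..u. g t) has_vector_derivative g x) (at x within {-N..N})"
    by (rule interval_integral_FTC2) (use N continuous_on_subset[OF gc] in auto)
  then have "((\<lambda>u. LBINT t=0..u. g t) has_vector_derivative g x) (at x within {-N..N})"
    by (simp only: zero_ereal_def)
  then have "((\<lambda>u. LBINT t=0..u. g t) has_vector_derivative g x) (at x)"
    using at_within_interior[OF N(5)] by simp
  then show ?thesis by (simp add: has_real_derivative_iff_has_vector_derivative)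
qed

lemma H2_repr:
  assumes "H2_with u uxx"
  shows "\<exists>U U1. (\<forall>x. (U has_real_derivative U1 x) (at x)) \<and> (AE x in lborel. u x = U x) \<and>
    (\<forall>x y. x \<le> y \<longrightarrow> U1 y - U1 x = (LINT t:{x..y}|lborel. uxx t))"
proof -
  obtain ux where Lu: "L2 u" and Luxx: "L2 uxx" and Lux: "L2 ux"
    and w1: "weak_deriv u ux" and w2: "weak_deriv ux uxx"
    using assms unfolding H2_with_def by blast
  obtain c1 where c1: "AE x in lborel. ux x = c1 + (LBINT y=0..x. uxx y)"
    using rep[OF L2_m[OF Lux] L2_li[OF Lux] L2_m[OF Luxx] L2_li[OF Luxx] w2] by blast
  define U1 where "U1 x = c1 + (LBINT y=0..x. uxx y)" for x :: real
  have U1c: "continuous_on UNIV U1"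
    unfolding U1_def by (intro continuous_intros G_cont[OF L2_li[OF Luxx]])
  have U1m: "U1 \<in> borel_measurable lborel" using borel_measurable_continuous_onI[OF U1c] by simp
  have w3: "weak_deriv u U1"
    unfolding weak_deriv_def
  proof (intro allI impI)
    fix \<phi> :: "real \<Rightarrow> real" assume tp: "test_fun \<phi>"
    obtain D R where D: "smooth_with D" "D 0 = \<phi>"
      using test_funE[OF tp] by blast
    have pm: "\<phi> \<in> borel_measurable borel" using smooth_borel[OF D(1), of 0] D(2) by simp
    have "(LINT x|lborel. U1 x * \<phi> x) = (LINT x|lborel. ux x * \<phi> x)"
    proof (rule integral_cong_AE)
      show "(\<lambda>x. U1 x * \<phi> x) \<in> borel_measurable lborel" using U1m pm by measurable
      show "(\<lambda>x. ux x * \<phi> x) \<in> borel_measurable lborel" using L2_m[OF Lux] pm by measurable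
      show "AE x in lborel. U1 x * \<phi> x = ux x * \<phi> x" using c1 by eventually_elim (simp add: U1_def)
    qed
    moreover have "(LINT x|lborel. u x * deriv \<phi> x) = - (LINT x|lborel. ux x * \<phi> x)"
      using w1 tp unfolding weak_deriv_def by blast
    ultimately show "(LINT x|lborel. u x * deriv \<phi> x) = - (LINT x|lborel. U1 x * \<phi> x)" by simp
  qed
  obtain c0 where c0: "AE x in lborel. u x = c0 + (LBINT y=0..x. U1 y)"
    using rep[OF L2_m[OF Lu] L2_li[OF Lu] U1m cont_li[OF U1c] w3] by blast
  define U where "U x = c0 + (LBINT y=0..x. U1 y)" for x :: real
  have "(U has_real_derivative U1 x) (at x)" for x
    unfolding U_def using G_deriv[OF U1c, of x] by (intro derivative_eq_intros) auto
  moreover have "AE x in lborel. u x = U x" using c0 by (simp add: U_def)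
  moreover have "U1 y - U1 x = (LINT t:{x..y}|lborel. uxx t)" if "x \<le> y" for x y
    using G_diff[OF L2_li[OF Luxx] that] by (simp add: U1_def)
  ultimately show ?thesis by blast
qed

lemma key_pos:
  fixes U U1 :: "real \<Rightarrow> real"
  assumes d: "\<And>x. (U has_real_derivative U1 x) (at x)"
    and b: "\<And>x y. x \<le> y \<Longrightarrow> y \<le> x + 1 \<Longrightarrow> \<bar>U1 y - U1 x\<bar> \<le> 1/2"
    and u0: "U x0 \<ge> 1"
  shows "\<exists>p. \<forall>x\<in>{p..p+1/4}. U x \<ge> 1/2"
proof (cases "U1 x0 \<ge> -1")
  case True
  have "U x \<ge> 1/2" if x: "x \<in> {x0..x0+1/4}" for x
  proof (cases "x = x0")
    case True then show ?thesis using u0 by simp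
  next
    case False
    then have lt: "x0 < x" using x by auto
    obtain z where z: "x0 < z" "z < x" "U x - U x0 = (x - x0) * U1 z"
      using MVT2[OF lt d] by blast
    have "\<bar>U1 z - U1 x0\<bar> \<le> 1/2" by (rule b) (use z x in auto)
    then have "U1 z \<ge> -3/2" using True by linarith
    then have "(x - x0) * U1 z \<ge> (x - x0) * (-3/2)" using lt by (intro mult_left_mono) auto
    moreover have "(x - x0) * (-3/2) \<ge> -3/8" using x by auto
    ultimately show ?thesis using z u0 by linarith
  qed
  then show ?thesis by blast
next
  case False
  have "U x \<ge> 1/2" if x: "x \<in> {x0-1/4..x0-1/4+1/4}" for x
  proof (cases "x = x0")
    case True then show ?thesis using u0 by simp
  next
    case False
    then have lt: "x < x0" using x by auto
    obtain z where z: "x < z" "z < x0" "U x0 - U x = (x0 - x) * U1 z"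
      using MVT2[OF lt d] by blast
    have "\<bar>U1 x0 - U1 z\<bar> \<le> 1/2" by (rule b) (use z x in auto)
    then have "U1 z \<le> 0" using \<open>\<not> U1 x0 \<ge> -1\<close> by linarith
    then have "(x0 - x) * U1 z \<le> 0" using lt by (simp add: mult_nonneg_nonpos)
    then show ?thesis using z u0 by linarith
  qed
  then show ?thesis by blast
qed

lemma key:
  fixes U U1 :: "real \<Rightarrow> real"
  assumes d: "\<And>x. (U has_real_derivative U1 x) (at x)"
    and b: "\<And>x y. x \<le> y \<Longrightarrow> y \<le> x + 1 \<Longrightarrow> \<bar>U1 y - U1 x\<bar> \<le> 1/2"
    and u0: "\<bar>U x0\<bar> \<ge> 1"
  shows "\<exists>p. \<forall>x\<in>{p..p+1/4}. \<bar>U x\<bar> \<ge> 1/2"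
proof (cases "U x0 \<ge> 1")
  case True
  then obtain p where "\<forall>x\<in>{p..p+1/4}. U x \<ge> 1/2" using key_pos[OF d b] by blast
  then show ?thesis by force
next
  case False
  then have "-U x0 \<ge> 1" using u0 by linarith
  moreover have "((\<lambda>x. - U x) has_real_derivative - U1 x) (at x)" for x
    using DERIV_minus[OF d] .
  moreover have "\<bar>- U1 y - - U1 x\<bar> \<le> 1/2" if "x \<le> y" "y \<le> x + 1" for x y
    using b[OF that] by linarith
  ultimately obtain p where "\<forall>x\<in>{p..p+1/4}. - U x \<ge> 1/2"
    using key_pos[of "\<lambda>x. - U x" "\<lambda>x. - U1 x" x0] by blast
  then show ?thesis by force
qed

lemma U1_bound:
  fixes uxx :: "real \<Rightarrow> real"
  assumes Luxx: "L2 uxx" and small: "(LINT t|lborel. (uxx t)\<^sup>2) \<le> 1/4"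
    and xy: "x \<le> y" "y \<le> x + 1"
  shows "\<bar>LINT t:{x..y}|lborel. uxx t\<bar> \<le> 1/2"
proof -
  have i1: "integrable lborel (\<lambda>t. indicator {x..y} t *\<^sub>R uxx t)"
    using L2_li[OF Luxx, of x y] by (simp add: set_integrable_def)
  have i2: "integrable lborel (\<lambda>t. indicator {x..y} t * (1/4) + (uxx t)\<^sup>2 :: real)"
    using Luxx unfolding L2_def
    by (intro Bochner_Integration.integrable_add integrable_mult_left integrable_real_indicator)
      (auto simp: emeasure_lborel_Icc_eq)
  have "\<bar>LINT t:{x..y}|lborel. uxx t\<bar> \<le> (LINT t|lborel. indicator {x..y} t * (1/4) + (uxx t)\<^sup>2)"
    unfolding set_lebesgue_integral_def
  proof (rule integral_abs_bound_integral[OF i1 i2])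
    fix t
    show "\<bar>indicator {x..y} t *\<^sub>R uxx t\<bar> \<le> indicator {x..y} t * (1/4) + (uxx t)\<^sup>2"
      using abs_le_sq[of "uxx t"] by (auto simp: indicator_def)
  qed
  also have "\<dots> = (LINT t|lborel. indicator {x..y} t * (1/4)) + (LINT t|lborel. (uxx t)\<^sup>2)"
    using Luxx unfolding L2_def
    by (intro Bochner_Integration.integral_add integrable_mult_left integrable_real_indicator)
      (auto simp: emeasure_lborel_Icc_eq)
  also have "(LINT t|lborel. indicator {x..y} t * (1/4 :: real)) = (y - x) / 4"
    using xy by simp
  finally have A: "\<bar>LINT t:{x..y}|lborel. uxx t\<bar> \<le> (y - x) / 4 + (LINT t|lborel. (uxx t)\<^sup>2)" .
  have B: "(y - x) / 4 \<le> 1/4" using xy by simp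
  from A B small show ?thesis by linarith
qed

lemma W_lower:
  fixes W :: "real \<Rightarrow> real"
  assumes Wi_small: "\<And>s. \<bar>s\<bar> \<le> 1 \<Longrightarrow> W s \<ge> \<eta> * s\<^sup>2"
    and Wi_large: "\<And>s. \<bar>s\<bar> \<ge> 1 \<Longrightarrow> W s \<ge> \<eta>" and eta: "\<eta> > 0"
    and s: "\<bar>s\<bar> \<ge> 1/2"
  shows "W s \<ge> \<eta> / 4"
proof (cases "\<bar>s\<bar> \<le> 1")
  case True
  have "s\<^sup>2 \<ge> (1/2)\<^sup>2" using s by (metis abs_le_square_iff power2_abs abs_of_nonneg le_divide_eq_1_pos zero_less_numeral divide_nonneg_nonneg zero_le_one zero_le_numeral)
  then have "\<eta> * s\<^sup>2 \<ge> \<eta> * (1/4)" using eta by (simp add: power2_eq_square)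
  then show ?thesis using Wi_small[OF True] by simp
next
  case False then show ?thesis using Wi_large[of s] eta by simp
qed

lemma per_n:
  fixes W :: "real \<Rightarrow> real" and \<eta> :: real and u uxx :: "real \<Rightarrow> real"
  assumes Wc: "continuous_on UNIV W"
    and Wi_small: "\<And>s. \<bar>s\<bar> \<le> 1 \<Longrightarrow> W s \<ge> \<eta> * s\<^sup>2"
    and Wi_large: "\<And>s. \<bar>s\<bar> \<ge> 1 \<Longrightarrow> W s \<ge> \<eta>" and eta: "\<eta> > 0"
    and H: "H2_with u uxx" and small: "(LINT t|lborel. (uxx t)\<^sup>2) \<le> 1/4"
    and smallW: "(\<integral>\<^sup>+x. ennreal (W (u x)) \<partial>lborel) < ennreal (\<eta>/16)"
  shows "(\<integral>\<^sup>+x. ennreal ((u x)\<^sup>2) \<partial>lborel) \<le> ennreal (1/\<eta>) * (\<integral>\<^sup>+x. ennreal (W (u x)) \<partial>lborel)"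
proof -
  obtain U U1 where d: "\<And>x. (U has_real_derivative U1 x) (at x)" and ae: "AE x in lborel. u x = U x"
    and diff: "\<And>x y. x \<le> y \<Longrightarrow> U1 y - U1 x = (LINT t:{x..y}|lborel. uxx t)"
    using H2_repr[OF H] by blast
  have Luxx: "L2 uxx" using H unfolding H2_with_def by blast
  have b: "\<bar>U1 y - U1 x\<bar> \<le> 1/2" if "x \<le> y" "y \<le> x + 1" for x y
    using U1_bound[OF Luxx small that] diff[OF that(1)] by simp
  have Wm: "W \<in> borel_measurable borel" by (rule borel_measurable_continuous_onI[OF Wc])
  have Uc: "continuous_on UNIV U"
    by (rule continuous_at_imp_continuous_on) (use d DERIV_isCont in blast)
  have Um: "U \<in> borel_measurable borel" by (rule borel_measurable_continuous_onI[OF Uc])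
  have Wnn: "W s \<ge> 0" for s
  proof (cases "\<bar>s\<bar> \<le> 1")
    case True then show ?thesis using Wi_small[OF True] eta by (meson mult_nonneg_nonneg less_imp_le zero_le_power2 order_trans)
  next
    case False then show ?thesis using Wi_large[of s] eta by simp
  qed
  have eqW: "(\<integral>\<^sup>+x. ennreal (W (u x)) \<partial>lborel) = (\<integral>\<^sup>+x. ennreal (W (U x)) \<partial>lborel)"
    by (rule nn_integral_cong_AE) (use ae in eventually_elim, simp)
  have lt1: "\<bar>U x\<bar> < 1" for x
  proof (rule ccontr)
    assume "\<not> \<bar>U x\<bar> < 1"
    then obtain p where p: "\<forall>y\<in>{p..p+1/4}. \<bar>U y\<bar> \<ge> 1/2" using key[OF d b, of x] by force
    have "ennreal (\<eta>/16) = ennreal (\<eta>/4) * emeasure lborel {p..p+1/4}"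
      using eta by (simp add: ennreal_mult[symmetric])
    also have "\<dots> = (\<integral>\<^sup>+y. ennreal (\<eta>/4) * indicator {p..p+1/4} y \<partial>lborel)"
      by (rule nn_integral_cmult_indicator[symmetric]) simp
    also have "\<dots> \<le> (\<integral>\<^sup>+y. ennreal (W (U y)) \<partial>lborel)"
    proof (rule nn_integral_mono)
      fix y
      show "ennreal (\<eta>/4) * indicator {p..p+1/4} y \<le> ennreal (W (U y))"
      proof (cases "y \<in> {p..p+1/4}")
        case True
        then have "W (U y) \<ge> \<eta>/4" using p by (intro W_lower[OF Wi_small Wi_large eta]) auto
        then show ?thesis using True by (simp add: ennreal_leI)
      qed simp
    qed
    finally show False using smallW eqW by simp
  qed
  have "(\<integral>\<^sup>+x. ennreal ((u x)\<^sup>2) \<partial>lborel) = (\<integral>\<^sup>+x. ennreal ((U x)\<^sup>2) \<partial>lborel)"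
    by (rule nn_integral_cong_AE) (use ae in eventually_elim, simp)
  also have "\<dots> \<le> (\<integral>\<^sup>+x. ennreal (1/\<eta>) * ennreal (W (U x)) \<partial>lborel)"
  proof (rule nn_integral_mono)
    fix x
    have "W (U x) \<ge> \<eta> * (U x)\<^sup>2" using lt1[of x] by (intro Wi_small) simp
    then have "(U x)\<^sup>2 \<le> 1/\<eta> * W (U x)" using eta by (simp add: field_simps)
    then have "ennreal ((U x)\<^sup>2) \<le> ennreal (1/\<eta> * W (U x))" by (rule ennreal_leI)
    moreover have "ennreal (1/\<eta> * W (U x)) = ennreal (1/\<eta>) * ennreal (W (U x))"
      by (rule ennreal_mult) (use eta Wnn[of "U x"] in auto)
    ultimately show "ennreal ((U x)\<^sup>2) \<le> ennreal (1/\<eta>) * ennreal (W (U x))" by simp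
  qed
  also have "\<dots> = ennreal (1/\<eta>) * (\<integral>\<^sup>+x. ennreal (W (U x)) \<partial>lborel)"
    by (rule nn_integral_cmult) (use Wm Um in measurable)
  finally show ?thesis using eqW by simp
qed

lemma two_half_ennreal: "(2::ennreal) * (1/2) = 1"
  by (metis divide_ennreal ennreal_1 ennreal_numeral ennreal_times_divide mult.right_neutral numeral_One zero_less_numeral zero_le_numeral divide_self_if zero_neq_numeral)

theorem lemma2:
  fixes W W' :: "real \<Rightarrow> real"
    and \<eta> M \<alpha> :: real
    and u uxx v :: "nat \<Rightarrow> real \<Rightarrow> real"
  assumes W_deriv: "\<And>s. (W has_real_derivative W' s) (at s)"
    and W'_cont: "continuous_on UNIV W'"
    and Wi_pos: "\<eta> > 0"
    and Wi_small: "\<And>s. \<bar>s\<bar> \<le> 1 \<Longrightarrow> W s \<ge> \<eta> * s\<^sup>2"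
    and Wi_large: "\<And>s. \<bar>s\<bar> \<ge> 1 \<Longrightarrow> W s \<ge> \<eta>"
    and Wii: "(W' has_real_derivative 1) (at 0)"
    and Wiii_M: "M > 0" and Wiii_alpha: "0 \<le> \<alpha>" "\<alpha> < 2"
    and Wiii: "\<And>s. s \<ge> 0 \<Longrightarrow> W s \<le> M * (if \<alpha> = 0 then 1 else s powr \<alpha>)"
    and inX: "\<And>n. H2_with (u n) (uxx n) \<and> L2 (v n)"
    and E_lim: "(\<lambda>n. energy W (u n) (uxx n) (v n)) \<longlonglongrightarrow> 0"
  shows "\<exists>r. strict_mono r \<and> (\<lambda>n. Xnorm (u (r n)) (uxx (r n)) (v (r n))) \<longlonglongrightarrow> 0"
proof -
  have Wc: "continuous_on UNIV W"
    by (rule continuous_at_imp_continuous_on) (use W_deriv DERIV_isCont in blast)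
  define E where "E n = energy W (u n) (uxx n) (v n)" for n
  define A where "A n = (\<integral>\<^sup>+ x. ennreal ((v n x)\<^sup>2 + (uxx n x)\<^sup>2) \<partial>lborel)" for n
  define B where "B n = (\<integral>\<^sup>+ x. ennreal (W (u n x)) \<partial>lborel)" for n
  define Q where "Q n = (\<integral>\<^sup>+ x. ennreal ((u n x)\<^sup>2) \<partial>lborel)" for n
  define X where "X n = (\<integral>\<^sup>+ x. ennreal ((v n x)\<^sup>2 + (uxx n x)\<^sup>2 + (u n x)\<^sup>2) \<partial>lborel)" for n
  have EAB: "E n = (1/2) * A n + B n" for n by (simp add: E_def A_def B_def energy_def)
  have BE: "B n \<le> E n" for n unfolding EAB by (rule add_increasing) simp_all
  have AE2: "A n \<le> 2 * E n" for n
  proof -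
    have "A n = 2 * ((1/2) * A n)" by (simp add: mult.assoc[symmetric] two_half_ennreal)
    also have "\<dots> \<le> 2 * E n" unfolding EAB by (intro mult_left_mono) (auto simp: add_increasing2)
    finally show ?thesis .
  qed
  have Lu: "L2 (u n)" and Luxx: "L2 (uxx n)" and Lv: "L2 (v n)" for n
    using inX[of n] unfolding H2_with_def by auto
  have XAQ: "X n = A n + Q n" for n
  proof -
    have Xeq: "X n = (\<integral>\<^sup>+ x. ennreal ((v n x)\<^sup>2 + (uxx n x)\<^sup>2) + ennreal ((u n x)\<^sup>2) \<partial>lborel)"
      unfolding X_def by (intro nn_integral_cong ennreal_plus) auto
    have m1: "(\<lambda>x. ennreal ((v n x)\<^sup>2 + (uxx n x)\<^sup>2)) \<in> borel_measurable lborel"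
      using L2_m[OF Luxx] L2_m[OF Lv] by measurable
    have m2: "(\<lambda>x. ennreal ((u n x)\<^sup>2)) \<in> borel_measurable lborel"
      using L2_m[OF Lu] by measurable
    note Xeq
    also have "(\<integral>\<^sup>+ x. ennreal ((v n x)\<^sup>2 + (uxx n x)\<^sup>2) + ennreal ((u n x)\<^sup>2) \<partial>lborel) = A n + Q n"
      unfolding A_def Q_def by (rule nn_integral_add[OF m1 m2])
    finally show ?thesis .
  qed
  define e where "e = min (\<eta>/16) (1/8)"
  have e: "e > 0" using Wi_pos by (simp add: e_def)
  have ev: "\<forall>\<^sub>F n in sequentially. E n < ennreal e"
    using order_tendstoD(2)[OF E_lim[folded E_def]] e by simp
  define c where "c = 2 + ennreal (1/\<eta>)"
  have bound: "\<forall>\<^sub>F n in sequentially. X n \<le> c * E n"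
    using ev
  proof eventually_elim
    fix n assume En: "E n < ennreal e"
    have e16: "ennreal e \<le> ennreal (\<eta>/16)" by (intro ennreal_leI) (simp add: e_def)
    have "B n < ennreal e" using BE[of n] En by (rule le_less_trans)
    then have Bn: "B n < ennreal (\<eta>/16)" using e16 by (rule less_le_trans)
    have "A n \<le> 2 * E n" by (rule AE2)
    also have "\<dots> \<le> 2 * ennreal e" using En by (intro mult_left_mono) auto
    also have "\<dots> = ennreal (2 * e)" using e by (simp add: ennreal_mult)
    also have "\<dots> \<le> ennreal (1/4)" by (intro ennreal_leI) (simp add: e_def)
    finally have An: "A n \<le> ennreal (1/4)" .
    have "(\<integral>\<^sup>+ x. ennreal ((uxx n x)\<^sup>2) \<partial>lborel) \<le> A n"
      unfolding A_def by (intro nn_integral_mono ennreal_leI) auto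
    also have "(\<integral>\<^sup>+ x. ennreal ((uxx n x)\<^sup>2) \<partial>lborel) = ennreal (LINT x|lborel. (uxx n x)\<^sup>2)"
      using Luxx[of n] unfolding L2_def by (intro nn_integral_eq_integral) auto
    finally have "ennreal (LINT x|lborel. (uxx n x)\<^sup>2) \<le> ennreal (1/4)" using An by (rule order_trans)
    then have small: "(LINT x|lborel. (uxx n x)\<^sup>2) \<le> 1/4"
      by (simp add: ennreal_le_iff)
    have "Q n \<le> ennreal (1/\<eta>) * B n"
      unfolding Q_def B_def
      by (rule per_n[OF Wc Wi_small Wi_large Wi_pos _ small]) (use inX Bn B_def in auto)
    also have "\<dots> \<le> ennreal (1/\<eta>) * E n" using BE by (intro mult_left_mono) auto
    finally have "Q n \<le> ennreal (1/\<eta>) * E n" .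
    then have "X n \<le> 2 * E n + ennreal (1/\<eta>) * E n" unfolding XAQ using AE2 by (intro add_mono)
    then show "X n \<le> c * E n" by (simp add: c_def distrib_right)
  qed
  have Xlim: "X \<longlonglongrightarrow> 0"
  proof (rule tendsto_sandwich[OF _ bound])
    show "\<forall>\<^sub>F n in sequentially. 0 \<le> X n" by simp
    show "(\<lambda>n. 0) \<longlonglongrightarrow> (0::ennreal)" by simp
    have "c < top" by (simp add: c_def)
    from ennreal_tendsto_cmult[OF this E_lim[folded E_def]]
    show "(\<lambda>n. c * E n) \<longlonglongrightarrow> 0" by simp
  qed
  have Xn: "(LINT x|lborel. (v n x)\<^sup>2 + (uxx n x)\<^sup>2 + (u n x)\<^sup>2) = enn2real (X n)" for n
    unfolding X_def using L2_m[OF Lu] L2_m[OF Luxx] L2_m[OF Lv]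
    by (intro integral_eq_nn_integral) auto
  have "(\<lambda>n. enn2real (X n)) \<longlonglongrightarrow> 0"
    by (rule tendsto_enn2real) (use Xlim in simp_all)
  then have "(\<lambda>n. sqrt (enn2real (X n))) \<longlonglongrightarrow> sqrt 0" by (rule tendsto_real_sqrt)
  then have "(\<lambda>n. Xnorm (u n) (uxx n) (v n)) \<longlonglongrightarrow> 0"
    by (simp add: Xnorm_def Xn)
  then show ?thesis by (intro exI[of _ id]) (simp add: strict_mono_id)
qed

end
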